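(* Let $\mathbf C=(\mathbf C_\tau,q_n^{\mathbf C},\mathsf e_i^{\mathbf C})$ be a finite dimensional clone $\tau$-algebra and $\overline{\mathbf R}_{\mathbf C}$ the clone $\rho_{\mathbf C}$-algebra of $\mathbf C$-representable functions. Then: (i) $\overline{\mathbf R}_{\mathbf C}$ is minimal; (ii) $\mathbf C$ is minimal if and only if $R_{\mathbf C}=\mathrm{Clo}\,\mathbf C_\tau$.
   Context: A clone $\tau$-algebra is an algebra $\mathbf C=(C,\sigma^{\mathbf C}\ (\sigma\in\tau),q_n^{\mathbf C}\ (n\ge0),\mathsf e_i^{\mathbf C}\ (i\ge1))$ with $\mathsf e_i$ nullary, $q_n$ of arity $n+1$, satisfying: (C1) $q_n(\mathsf e_i,x_1,\dots,x_n)=x_i$ ($1\le i\le n$); (C2) $q_n(\mathsf e_j,x_1,\dots,x_n)=\mathsf e_j$ ($j>n$); (C3) $q_n(x,\mathsf e_1,\dots,\mathsf e_n)=x$; (C4) $q_k(x,y_1,\dots,y_k)=q_n(x,y_1,\dots,y_k,\mathsf e_{k+1},\dots,\mathsf e_n)$ ($n>k$); (C5) $q_n(q_n(x,\mathbf y),\mathbf z)=q_n(x,q_n(y_1,\mathbf z),\dots,q_n(y_n,\mathbf z))$; (C6) $q_n(\sigma(x_1,\dots,x_k),\mathbf y)=\sigma(q_n(x_1,\mathbf y),\dots,q_n(x_k,\mathbf y))$ for $\sigma\in\tau$ of arity $k$. $\mathbf C_\tau$ is the $\tau$-reduct. $a$ is independent of $\mathsf e_n$ if $q_n(a,\mathsf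 e_1,\dots,\mathsf e_{n-1},\mathsf e_{n+1})=a$; its dimension is the largest $n$ it depends on ($0$ if none, infinite if infinitely many); finite dimensional means every element has finite dimension. $\mathbf C$ is minimal if $C$ is the smallest subset containing all $\mathsf e_i^{\mathbf C}$ and closed under the operations $\sigma^{\mathbf C}$, $\sigma\in\tau$. A function $f:C^k\to C$ is $\mathbf C$-representable if $f(\mathsf e_1,\dots,\mathsf e_k)$ has dimension $\le k$ and $f(a_1,\dots,a_k)=q_k(f(\mathsf e_1,\dots,\mathsf e_k),a_1,\dots,a_k)$ for all $a_i$; $R_{\mathbf C}$ is the set of them. $\rho_{\mathbf C}$ has an operation symbol $\overline f$ of arity $k$ for each $k$-ary $f\in R_{\mathbf C}$, and $\overline{\mathbf R}_{\mathbf C}=(C,f\ (f\in R_{\mathbf C}),q_n^{\mathbf C},\mathsf e_i^{\mathbf C})$ is a clone $\rho_{\mathbf C}$-algebra. $\mathrm{Clo}\,\mathbf C_\tau$ is the clone of term operations of $\mathbf C_\tau$ (smallest set of finitary operations on $C$, nullary included, containing the projections and the basic operations and closed under composition and under restriction, i.e. dropping a last argument on which the operation does not depend). *)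

theory Defs
  imports Main
begin

text \<open>A clone tau-algebra is represented by: a carrier C :: 'a set; a set T of
operation symbols with arity function ar and interpretation sig (sig s takes a list
of length ar s); q n x ys stands for q_n(x, y_1, ..., y_n) (length ys = n);
e i stands for e_i (i >= 1; e 0 is unused).
Finitary operations on C are pairs (k, f) with f :: 'a list => 'a, normalized to be
undefined outside C^k.\<close>

definition es :: "(nat \<Rightarrow> 'a) \<Rightarrow> nat \<Rightarrow> 'a list" where
  "es e n = map e [1..<Suc n]"

definition tuples :: "'a set \<Rightarrow> nat \<Rightarrow> 'a list set" where
  "tuples C k = {xs. length xs = k \<and> set xs \<subseteq> C}"

definition ext_op :: "'a set \<Rightarrow> nat \<Rightarrow> ('a list \<Rightarrow> 'a) \<Rightarrow> ('a list \<Rightarrow> 'a)" where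
  "ext_op C k f = (\<lambda>xs. if xs \<in> tuples C k then f xs else undefined)"

definition clone_alg ::
  "'a set \<Rightarrow> 's set \<Rightarrow> ('s \<Rightarrow> nat) \<Rightarrow> ('s \<Rightarrow> 'a list \<Rightarrow> 'a)
    \<Rightarrow> (nat \<Rightarrow> 'a \<Rightarrow> 'a list \<Rightarrow> 'a) \<Rightarrow> (nat \<Rightarrow> 'a) \<Rightarrow> bool" where
  "clone_alg C T ar sig q e \<longleftrightarrow>
     (\<forall>i\<ge>1. e i \<in> C) \<and>
     (\<forall>s\<in>T. \<forall>xs\<in>tuples C (ar s). sig s xs \<in> C) \<and>
     (\<forall>n. \<forall>x\<in>C. \<forall>ys\<in>tuples C n. q n x ys \<in> C) \<and>
     \<comment> \<open>(C1)\<close>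
     (\<forall>n i. \<forall>xs\<in>tuples C n. 1 \<le> i \<and> i \<le> n \<longrightarrow> q n (e i) xs = xs ! (i - 1)) \<and>
     \<comment> \<open>(C2)\<close>
     (\<forall>n j. \<forall>xs\<in>tuples C n. j > n \<longrightarrow> q n (e j) xs = e j) \<and>
     \<comment> \<open>(C3)\<close>
     (\<forall>n. \<forall>x\<in>C. q n x (es e n) = x) \<and>
     \<comment> \<open>(C4)\<close>
     (\<forall>n k. \<forall>x\<in>C. \<forall>ys\<in>tuples C k. n > k \<longrightarrow>
        q k x ys = q n x (ys @ map e [Suc k..<Suc n])) \<and>
     \<comment> \<open>(C5)\<close>
     (\<forall>n. \<forall>x\<in>C. \<forall>ys\<in>tuples C n. \<forall>zs\<in>tuples C n.
        q n (q n x ys) zs = q n x (map (\<lambda>y. q n y zs) ys)) \<and>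
     \<comment> \<open>(C6)\<close>
     (\<forall>n. \<forall>s\<in>T. \<forall>xs\<in>tuples C (ar s). \<forall>ys\<in>tuples C n.
        q n (sig s xs) ys = sig s (map (\<lambda>x. q n x ys) xs))"

definition indep :: "(nat \<Rightarrow> 'a \<Rightarrow> 'a list \<Rightarrow> 'a) \<Rightarrow> (nat \<Rightarrow> 'a) \<Rightarrow> 'a \<Rightarrow> nat \<Rightarrow> bool" where
  "indep q e a n \<longleftrightarrow> q n a (map e [1..<n] @ [e (Suc n)]) = a"

definition depends_on :: "(nat \<Rightarrow> 'a \<Rightarrow> 'a list \<Rightarrow> 'a) \<Rightarrow> (nat \<Rightarrow> 'a) \<Rightarrow> 'a \<Rightarrow> nat \<Rightarrow> bool" where
  "depends_on q e a n \<longleftrightarrow> n \<ge> 1 \<and> \<not> indep q e a n"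

definition dim_le :: "(nat \<Rightarrow> 'a \<Rightarrow> 'a list \<Rightarrow> 'a) \<Rightarrow> (nat \<Rightarrow> 'a) \<Rightarrow> 'a \<Rightarrow> nat \<Rightarrow> bool" where
  "dim_le q e a k \<longleftrightarrow> (\<forall>n. depends_on q e a n \<longrightarrow> n \<le> k)"

definition finite_dimensional :: "'a set \<Rightarrow> (nat \<Rightarrow> 'a \<Rightarrow> 'a list \<Rightarrow> 'a) \<Rightarrow> (nat \<Rightarrow> 'a) \<Rightarrow> bool" where
  "finite_dimensional C q e \<longleftrightarrow> (\<forall>a\<in>C. finite {n. depends_on q e a n})"

definition representable ::
  "'a set \<Rightarrow> (nat \<Rightarrow> 'a \<Rightarrow> 'a list \<Rightarrow> 'a) \<Rightarrow> (nat \<Rightarrow> 'a) \<Rightarrow> nat \<Rightarrow> ('a list \<Rightarrow> 'a) \<Rightarrow> bool" where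
  "representable C q e k f \<longleftrightarrow>
     (\<forall>xs\<in>tuples C k. f xs \<in> C) \<and>
     dim_le q e (f (es e k)) k \<and>
     (\<forall>xs\<in>tuples C k. f xs = q k (f (es e k)) xs)"

definition R_C :: "'a set \<Rightarrow> (nat \<Rightarrow> 'a \<Rightarrow> 'a list \<Rightarrow> 'a) \<Rightarrow> (nat \<Rightarrow> 'a) \<Rightarrow> (nat \<times> ('a list \<Rightarrow> 'a)) set" where
  "R_C C q e = {(k, f). f = ext_op C k f \<and> representable C q e k f}"

inductive_set Clo :: "'a set \<Rightarrow> 's set \<Rightarrow> ('s \<Rightarrow> nat) \<Rightarrow> ('s \<Rightarrow> 'a list \<Rightarrow> 'a)
    \<Rightarrow> (nat \<times> ('a list \<Rightarrow> 'a)) set"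
  for C :: "'a set" and T :: "'s set" and ar :: "'s \<Rightarrow> nat" and sig :: "'s \<Rightarrow> 'a list \<Rightarrow> 'a" where
  proj: "i < k \<Longrightarrow> (k, ext_op C k (\<lambda>xs. xs ! i)) \<in> Clo C T ar sig"
| basic: "s \<in> T \<Longrightarrow> (ar s, ext_op C (ar s) (sig s)) \<in> Clo C T ar sig"
| comp: "(n, f) \<in> Clo C T ar sig \<Longrightarrow> length gs = n \<Longrightarrow> (\<forall>g\<in>set gs. (k, g) \<in> Clo C T ar sig)
          \<Longrightarrow> (k, ext_op C k (\<lambda>xs. f (map (\<lambda>g. g xs) gs))) \<in> Clo C T ar sig"
| restr: "(Suc k, f) \<in> Clo C T ar sig \<Longrightarrow>
          (\<forall>xs\<in>tuples C k. \<forall>a\<in>C. \<forall>b\<in>C. f (xs @ [a]) = f (xs @ [b])) \<Longrightarrow> c \<in> C \<Longrightarrow>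
          (k, ext_op C k (\<lambda>xs. f (xs @ [c]))) \<in> Clo C T ar sig"

definition minimal :: "'a set \<Rightarrow> (nat \<Rightarrow> 'a) \<Rightarrow> (nat \<times> ('a list \<Rightarrow> 'a)) set \<Rightarrow> bool" where
  "minimal C e ops \<longleftrightarrow>
     (\<forall>S. S \<subseteq> C \<and> (\<forall>i\<ge>1. e i \<in> S) \<and> (\<forall>(k, f)\<in>ops. \<forall>xs\<in>tuples S k. f xs \<in> S) \<longrightarrow> S = C)"

definition sig_ops :: "'s set \<Rightarrow> ('s \<Rightarrow> nat) \<Rightarrow> ('s \<Rightarrow> 'a list \<Rightarrow> 'a) \<Rightarrow> (nat \<times> ('a list \<Rightarrow> 'a)) set" where
  "sig_ops T ar sig = (\<lambda>s. (ar s, sig s)) ` T"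

end

theory Submission imports Defs begin

locale ca =
  fixes C :: "'a set" and T :: "'s set" and ar :: "'s \<Rightarrow> nat"
    and sig :: "'s \<Rightarrow> 'a list \<Rightarrow> 'a"
    and q :: "nat \<Rightarrow> 'a \<Rightarrow> 'a list \<Rightarrow> 'a" and e :: "nat \<Rightarrow> 'a"
  assumes CA: "clone_alg C T ar sig q e"
begin

lemma e_in: "1 \<le> i \<Longrightarrow> e i \<in> C" using CA[unfolded clone_alg_def, THEN conjunct1] by blast
lemma sig_in: "s \<in> T \<Longrightarrow> xs \<in> tuples C (ar s) \<Longrightarrow> sig s xs \<in> C"
  using CA[unfolded clone_alg_def, THEN conjunct2, THEN conjunct1] by blast
lemma q_in: "x \<in> C \<Longrightarrow> ys \<in> tuples C n \<Longrightarrow> q n x ys \<in> C"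
  using CA[unfolded clone_alg_def, THEN conjunct2, THEN conjunct2, THEN conjunct1] by blast
lemma C1: "xs \<in> tuples C n \<Longrightarrow> 1 \<le> i \<Longrightarrow> i \<le> n \<Longrightarrow> q n (e i) xs = xs ! (i - 1)"
  using CA[unfolded clone_alg_def, THEN conjunct2, THEN conjunct2, THEN conjunct2, THEN conjunct1] by blast
lemma C2: "xs \<in> tuples C n \<Longrightarrow> j > n \<Longrightarrow> q n (e j) xs = e j"
  using CA[unfolded clone_alg_def, THEN conjunct2, THEN conjunct2, THEN conjunct2, THEN conjunct2, THEN conjunct1] by blast
lemma C3: "x \<in> C \<Longrightarrow> q n x (es e n) = x"
  using CA[unfolded clone_alg_def, THEN conjunct2, THEN conjunct2, THEN conjunct2, THEN conjunct2, THEN conjunct2, THEN conjunct1] by blast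
lemma C4: "x \<in> C \<Longrightarrow> ys \<in> tuples C k \<Longrightarrow> n > k \<Longrightarrow> q k x ys = q n x (ys @ map e [Suc k..<Suc n])"
  using CA[unfolded clone_alg_def, THEN conjunct2, THEN conjunct2, THEN conjunct2, THEN conjunct2, THEN conjunct2, THEN conjunct2, THEN conjunct1] by blast
lemma C5: "x \<in> C \<Longrightarrow> ys \<in> tuples C n \<Longrightarrow> zs \<in> tuples C n \<Longrightarrow>
        q n (q n x ys) zs = q n x (map (\<lambda>y. q n y zs) ys)"
  using CA[unfolded clone_alg_def, THEN conjunct2, THEN conjunct2, THEN conjunct2, THEN conjunct2, THEN conjunct2, THEN conjunct2, THEN conjunct2, THEN conjunct1] by blast
lemma C6: "s \<in> T \<Longrightarrow> xs \<in> tuples C (ar s) \<Longrightarrow> ys \<in> tuples C n \<Longrightarrow>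
        q n (sig s xs) ys = sig s (map (\<lambda>x. q n x ys) xs)"
  using CA[unfolded clone_alg_def, THEN conjunct2, THEN conjunct2, THEN conjunct2, THEN conjunct2, THEN conjunct2, THEN conjunct2, THEN conjunct2, THEN conjunct2] by blast

lemma tuplesI: "length xs = n \<Longrightarrow> set xs \<subseteq> C \<Longrightarrow> xs \<in> tuples C n"
  unfolding tuples_def by auto
lemma tuplesD: "xs \<in> tuples C n \<Longrightarrow> length xs = n \<and> set xs \<subseteq> C"
  unfolding tuples_def by auto

lemma e_map_tuples: "map e [Suc a..<b] \<in> tuples C (b - Suc a)"
  by (rule tuplesI) (auto intro: e_in)

lemma es_tuples: "es e n \<in> tuples C n"
  unfolding es_def by (rule tuplesI) (auto intro: e_in)

lemma es_len[simp]: "length (es e n) = n" unfolding es_def by simp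
lemma es_nth[simp]: "i < n \<Longrightarrow> es e n ! i = e (Suc i)" unfolding es_def by (simp del: upt_Suc)
lemma es_Suc: "es e (Suc n) = es e n @ [e (Suc n)]" unfolding es_def by simp

lemma map_q_es: "zs \<in> tuples C n \<Longrightarrow> map (\<lambda>y. q n y zs) (es e n) = zs"
  by (rule nth_equalityI) (auto simp: C1 dest: tuplesD)


lemma map_q_es_prefix: "zs \<in> tuples C m \<Longrightarrow> n \<le> m \<Longrightarrow> map (\<lambda>y. q m y zs) (es e n) = take n zs"
  by (rule nth_equalityI) (auto simp: C1 dest: tuplesD)

lemma tuples_mono: "S \<subseteq> C \<Longrightarrow> xs \<in> tuples S k \<Longrightarrow> xs \<in> tuples C k"
  unfolding tuples_def by auto

lemma tuples_app: "xs \<in> tuples C k \<Longrightarrow> ys \<in> tuples C m \<Longrightarrow> xs @ ys \<in> tuples C (k + m)"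
  unfolding tuples_def by auto

lemma tuples_snoc: "xs \<in> tuples C k \<Longrightarrow> c \<in> C \<Longrightarrow> xs @ [c] \<in> tuples C (Suc k)"
  unfolding tuples_def by auto

lemma pad: "x \<in> C \<Longrightarrow> ys \<in> tuples C k \<Longrightarrow> k \<le> m \<Longrightarrow> q k x ys = q m x (ys @ map e [Suc k..<Suc m])"
  using C4[of x ys k m] by (cases "k = m") (auto simp del: upt_Suc)

lemma pad_tuples: "ys \<in> tuples C k \<Longrightarrow> k \<le> m \<Longrightarrow> ys @ map e [Suc k..<Suc m] \<in> tuples C m"
  by (rule tuplesI) (auto dest: tuplesD intro: e_in simp del: upt_Suc)

lemma W_tuples: "1 \<le> p \<Longrightarrow> map e [1..<p] @ [e (Suc p)] \<in> tuples C p"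
  by (rule tuplesI) (auto intro: e_in)

lemma step:
  assumes x: "x \<in> C" and ind: "indep q e x (Suc p)" and ys: "ys \<in> tuples C p" and c: "c \<in> C"
  shows "q (Suc p) x (ys @ [c]) = q p x ys"
proof -
  let ?w = "es e p @ [e (Suc (Suc p))]"
  have w: "?w \<in> tuples C (Suc p)" using tuples_snoc[OF es_tuples e_in] by simp
  have xw: "q (Suc p) x ?w = x" using ind unfolding indep_def es_def by simp
  have gen: "q (Suc p) x (ys @ [d]) = q (Suc p) x (ys @ [e (Suc (Suc p))])" if d: "d \<in> C" for d
  proof -
    have yd: "ys @ [d] \<in> tuples C (Suc p)" using tuples_snoc[OF ys d] .
    have lys: "length ys = p" using ys by (simp add: tuplesD)
    have "q (Suc p) x (ys @ [d]) = q (Suc p) (q (Suc p) x ?w) (ys @ [d])" using xw by simp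
    also have "\<dots> = q (Suc p) x (map (\<lambda>y. q (Suc p) y (ys @ [d])) ?w)"
      using C5[OF x w yd] .
    also have "map (\<lambda>y. q (Suc p) y (ys @ [d])) ?w = ys @ [e (Suc (Suc p))]"
      using map_q_es_prefix[OF yd, of p] C2[OF yd, of "Suc (Suc p)"] lys by simp
    finally show ?thesis .
  qed
  have "q (Suc p) x (ys @ [c]) = q (Suc p) x (ys @ [e (Suc p)])"
    using gen[OF c] gen[OF e_in[of "Suc p"]] by simp
  also have "\<dots> = q p x ys" using C4[OF x ys, of "Suc p"] by simp
  finally show ?thesis .
qed

lemma indep_of_dim: "dim_le q e x n \<Longrightarrow> n < p \<Longrightarrow> indep q e x p"
  unfolding dim_le_def depends_on_def
proof (rule ccontr)
  assume a: "\<forall>na. 1 \<le> na \<and> \<not> indep q e x na \<longrightarrow> na \<le> n" and b: "n < p" and c: "\<not> indep q e x p"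
  have "1 \<le> p" using b by simp
  thus False using a b c by (meson not_le)
qed

lemma L:
  assumes x: "x \<in> C" and d: "dim_le q e x n"
  shows "n \<le> m \<Longrightarrow> ys \<in> tuples C m \<Longrightarrow> q m x ys = q n x (take n ys)"
proof (induction m arbitrary: ys)
  case 0
  then show ?case by (simp add: tuples_def)
next
  case (Suc m)
  show ?case
  proof (cases "n = Suc m")
    case True
    then show ?thesis using Suc.prems by (simp add: tuplesD)
  next
    case False
    hence nm: "n \<le> m" using Suc.prems by simp
    have ne: "ys \<noteq> []" using Suc.prems(2) by (auto simp: tuples_def)
    define ys' where "ys' = butlast ys"
    define c where "c = last ys"
    have ysd: "ys = ys' @ [c]" using ne unfolding ys'_def c_def by simp
    have ys': "ys' \<in> tuples C m" and c: "c \<in> C" using Suc.prems(2) unfolding ysd tuples_def by auto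
    have "q (Suc m) x ys = q m x ys'" unfolding ysd
      by (rule step[OF x indep_of_dim[OF d] ys' c]) (use nm in simp)
    also have "\<dots> = q n x (take n ys')" using Suc.IH[OF nm ys'] .
    also have "take n ys' = take n ys" unfolding ysd using nm ys' by (simp add: tuplesD)
    finally show ?thesis .
  qed
qed

lemma ext_op_idem[simp]: "ext_op C k (ext_op C k g) = ext_op C k g"
  unfolding ext_op_def by auto

lemma ext_op_cong: "(\<And>xs. xs \<in> tuples C k \<Longrightarrow> f xs = g xs) \<Longrightarrow> ext_op C k f = ext_op C k g"
  unfolding ext_op_def by auto

lemma R_mem: "a \<in> C \<Longrightarrow> dim_le q e a k \<Longrightarrow> (k, ext_op C k (\<lambda>xs. q k a xs)) \<in> R_C C q e"
  unfolding R_C_def representable_def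
  by (auto simp: ext_op_def es_tuples C3 q_in)

lemma R_D:
  assumes "(k, f) \<in> R_C C q e"
  shows "f (es e k) \<in> C" "dim_le q e (f (es e k)) k" "f = ext_op C k (\<lambda>xs. q k (f (es e k)) xs)"
    "\<And>xs. xs \<in> tuples C k \<Longrightarrow> f xs = q k (f (es e k)) xs"
    "\<And>xs. xs \<in> tuples C k \<Longrightarrow> f xs \<in> C"
proof -
  have f: "f = ext_op C k f" and r: "representable C q e k f" using assms unfolding R_C_def by auto
  have r1: "\<forall>xs\<in>tuples C k. f xs \<in> C" and r2: "dim_le q e (f (es e k)) k"
    and r3: "\<forall>xs\<in>tuples C k. f xs = q k (f (es e k)) xs"
    using r unfolding representable_def by blast+
  show "f (es e k) \<in> C" using r1 es_tuples by blast
  show "dim_le q e (f (es e k)) k" by (rule r2)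
  show "\<And>xs. xs \<in> tuples C k \<Longrightarrow> f xs = q k (f (es e k)) xs" using r3 by blast
  show "\<And>xs. xs \<in> tuples C k \<Longrightarrow> f xs \<in> C" using r1 by blast
  have h: "ext_op C k f = ext_op C k (\<lambda>xs. q k (f (es e k)) xs)"
    by (rule ext_op_cong) (use r3 in blast)
  show "f = ext_op C k (\<lambda>xs. q k (f (es e k)) xs)" using trans[OF f h] .
qed

lemma minimal_R:
  assumes fd: "finite_dimensional C q e"
  shows "minimal C e (R_C C q e)"
  unfolding minimal_def
proof (intro allI impI)
  fix S assume H: "S \<subseteq> C \<and> (\<forall>i\<ge>1. e i \<in> S) \<and> (\<forall>(k, f)\<in>R_C C q e. \<forall>xs\<in>tuples S k. f xs \<in> S)"
  have "C \<subseteq> S"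
  proof
    fix a assume a: "a \<in> C"
    define D where "D = {n. depends_on q e a n}"
    have fD: "finite D" using fd a unfolding finite_dimensional_def D_def by auto
    define k where "k = Max (insert 0 D)"
    have dk: "dim_le q e a k" unfolding dim_le_def k_def
      using fD D_def by auto
    have "es e k \<in> tuples S k" using H unfolding es_def tuples_def by auto
    hence "ext_op C k (\<lambda>xs. q k a xs) (es e k) \<in> S" using H R_mem[OF a dk] by blast
    thus "a \<in> S" using es_tuples C3[OF a] unfolding ext_op_def by simp
  qed
  thus "S = C" using H by blast
qed


lemma map_q_tuples: "B \<in> tuples C m \<Longrightarrow> X \<in> tuples C m \<Longrightarrow> map (\<lambda>y. q m y X) B \<in> tuples C m"
proof (rule tuplesI)
  assume B: "B \<in> tuples C m" and X: "X \<in> tuples C m"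
  show "length (map (\<lambda>y. q m y X) B) = m" using tuplesD[OF B] by simp
  show "set (map (\<lambda>y. q m y X) B) \<subseteq> C" using tuplesD[OF B] q_in[OF _ X] by auto
qed

lemma dim_e: "1 \<le> j \<Longrightarrow> j \<le> k \<Longrightarrow> dim_le q e (e j) k"
  unfolding dim_le_def
proof (intro allI impI)
  fix n assume j: "1 \<le> j" "j \<le> k" and d: "depends_on q e (e j) n"
  show "n \<le> k"
  proof (rule ccontr)
    assume "\<not> n \<le> k"
    hence nk: "k < n" by simp
    have "q n (e j) (map e [1..<n] @ [e (Suc n)]) = (map e [1..<n] @ [e (Suc n)]) ! (j - 1)"
      using C1[OF W_tuples, of n j] j nk by simp
    also have "\<dots> = e j"
    proof -
      have "j - 1 < n - 1" using j nk by simp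
      thus ?thesis using j by (simp add: nth_append)
    qed
    finally have "indep q e (e j) n" unfolding indep_def .
    thus False using d unfolding depends_on_def by simp
  qed
qed

lemma K:
  assumes a: "a \<in> C" and da: "dim_le q e a n" and bs: "bs \<in> tuples C n"
    and db: "\<forall>b\<in>set bs. dim_le q e b k" and xs: "xs \<in> tuples C k"
  shows "q k (q n a bs) xs = q n a (map (\<lambda>b. q k b xs) bs)"
proof -
  define m where "m = max n k"
  define X where "X = xs @ map e [Suc k..<Suc m]"
  define B where "B = bs @ map e [Suc n..<Suc m]"
  have X: "X \<in> tuples C m" unfolding X_def m_def by (rule pad_tuples[OF xs]) simp
  have B: "B \<in> tuples C m" unfolding B_def m_def by (rule pad_tuples[OF bs]) simp
  have bsC: "set bs \<subseteq> C" and lbs: "length bs = n" using bs by (auto simp: tuplesD)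
  have c: "q n a bs \<in> C" using q_in[OF a bs] .
  have "q k (q n a bs) xs = q m (q n a bs) X" unfolding X_def using pad[OF c xs] m_def by simp
  also have "\<dots> = q m (q m a B) X"
  proof -
    have e1: "q n a bs = q m a B" unfolding B_def by (rule pad[OF a bs]) (simp add: m_def)
    show ?thesis by (simp only: e1)
  qed
  also have "q m (q m a B) X = q m a (map (\<lambda>y. q m y X) B)" using C5[OF a B X] .
  also have "\<dots> = q n a (take n (map (\<lambda>y. q m y X) B))"
    by (rule L[OF a da]) (use map_q_tuples[OF B X] in \<open>auto simp: m_def\<close>)
  also have "take n (map (\<lambda>y. q m y X) B) = map (\<lambda>y. q m y X) bs"
    unfolding B_def using lbs by simp
  also have "\<dots> = map (\<lambda>b. q k b xs) bs"
  proof (rule map_cong[OF refl])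
    fix b assume b: "b \<in> set bs"
    have "q m b X = q k b (take k X)"
      by (rule L) (use b bsC db X in \<open>auto simp: m_def\<close>)
    also have "take k X = xs" unfolding X_def using xs by (simp add: tuplesD)
    finally show "q m b X = q k b xs" .
  qed
  finally show ?thesis .
qed

lemma K2:
  assumes a: "a \<in> C" and da: "dim_le q e a n" and bs: "bs \<in> tuples C n"
    and db: "\<forall>b\<in>set bs. dim_le q e b k"
  shows "dim_le q e (q n a bs) k"
  unfolding dim_le_def
proof (intro allI impI)
  fix p assume dp: "depends_on q e (q n a bs) p"
  show "p \<le> k"
  proof (rule ccontr)
    assume "\<not> p \<le> k"
    hence pk: "k < p" by simp
    define W where "W = map e [1..<p] @ [e (Suc p)]"
    have W: "W \<in> tuples C p" unfolding W_def using W_tuples pk by simp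
    define m where "m = max n p"
    define Y where "Y = W @ map e [Suc p..<Suc m]"
    define B where "B = bs @ map e [Suc n..<Suc m]"
    have Y: "Y \<in> tuples C m" unfolding Y_def m_def by (rule pad_tuples[OF W]) simp
    have B: "B \<in> tuples C m" unfolding B_def m_def by (rule pad_tuples[OF bs]) simp
    have bsC: "set bs \<subseteq> C" and lbs: "length bs = n" using bs by (auto simp: tuplesD)
    have c: "q n a bs \<in> C" using q_in[OF a bs] .
    have tY: "take k Y = es e k"
    proof -
      have "take k Y = take k (map e [1..<p])" unfolding Y_def W_def using pk by simp
      also have "\<dots> = es e k" unfolding es_def using pk by (simp add: take_map take_upt del: upt_Suc)
      finally show ?thesis .
    qed
    have "q p (q n a bs) W = q m (q n a bs) Y" unfolding Y_def using pad[OF c W] m_def by simp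
    also have "\<dots> = q m (q m a B) Y"
    proof -
      have e1: "q n a bs = q m a B" unfolding B_def by (rule pad[OF a bs]) (simp add: m_def)
      show ?thesis by (simp only: e1)
    qed
    also have "q m (q m a B) Y = q m a (map (\<lambda>y. q m y Y) B)" using C5[OF a B Y] .
    also have "\<dots> = q n a (take n (map (\<lambda>y. q m y Y) B))"
      by (rule L[OF a da]) (use map_q_tuples[OF B Y] in \<open>auto simp: m_def\<close>)
    also have "take n (map (\<lambda>y. q m y Y) B) = map (\<lambda>y. q m y Y) bs"
      unfolding B_def using lbs by simp
    also have "\<dots> = bs"
    proof (rule map_idI)
      fix b assume b: "b \<in> set bs"
      have "q m b Y = q k b (take k Y)"
        by (rule L) (use b bsC db Y pk in \<open>auto simp: m_def\<close>)
      also have "\<dots> = b" using tY C3 b bsC by auto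
      finally show "q m b Y = b" .
    qed
    finally have "indep q e (q n a bs) p" unfolding indep_def W_def .
    thus False using dp unfolding depends_on_def by simp
  qed
qed


lemma Clo_R: "(k, f) \<in> Clo C T ar sig \<Longrightarrow> (k, f) \<in> R_C C q e"
proof (induction rule: Clo.induct)
  case (proj i k)
  have "ext_op C k (\<lambda>xs. xs ! i) = ext_op C k (\<lambda>xs. q k (e (Suc i)) xs)"
    by (rule ext_op_cong) (use proj in \<open>simp add: C1\<close>)
  moreover have "(k, ext_op C k (\<lambda>xs. q k (e (Suc i)) xs)) \<in> R_C C q e"
    by (rule R_mem) (use proj in \<open>auto intro: e_in dim_e\<close>)
  ultimately show ?case by simp
next
  case (basic s)
  define m where "m = ar s"
  define a where "a = sig s (es e m)"
  have a: "a \<in> C" unfolding a_def m_def using sig_in[OF basic es_tuples] .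
  have "ext_op C m (sig s) = ext_op C m (\<lambda>xs. q m a xs)"
    by (rule ext_op_cong) (simp add: a_def C6[OF basic] es_tuples m_def map_q_es)
  moreover have "dim_le q e a m"
    unfolding dim_le_def
  proof (intro allI impI)
    fix p assume dp: "depends_on q e a p"
    show "p \<le> m"
    proof (rule ccontr)
      assume "\<not> p \<le> m"
      hence pm: "m < p" by simp
      have W: "map e [1..<p] @ [e (Suc p)] \<in> tuples C p" using W_tuples pm by simp
      have "q p a (map e [1..<p] @ [e (Suc p)]) = sig s (map (\<lambda>x. q p x (map e [1..<p] @ [e (Suc p)])) (es e m))"
        unfolding a_def m_def using C6[OF basic es_tuples W] .
      also have "map (\<lambda>x. q p x (map e [1..<p] @ [e (Suc p)])) (es e m) = take m (map e [1..<p] @ [e (Suc p)])"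
        using map_q_es_prefix[OF W, of m] pm by simp
      also have "\<dots> = es e m" unfolding es_def using pm by (simp add: take_map take_upt del: upt_Suc)
      finally have "indep q e a p" unfolding indep_def a_def .
      thus False using dp unfolding depends_on_def by simp
    qed
  qed
  ultimately show ?case using R_mem[OF a] m_def by simp
next
  case (comp n f gs k)
  define a where "a = f (es e n)"
  define b where "b = (\<lambda>g::'a list \<Rightarrow> 'a. g (es e k))"
  have fR: "(n, f) \<in> R_C C q e" using comp by simp
  have gR: "\<And>g. g \<in> set gs \<Longrightarrow> (k, g) \<in> R_C C q e" using comp by simp
  have a: "a \<in> C" "dim_le q e a n" using R_D[OF fR] unfolding a_def by auto
  have bs: "map b gs \<in> tuples C n" using R_D(1)[OF gR] comp(2) unfolding b_def by (auto intro!: tuplesI)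
  have db: "\<forall>x\<in>set (map b gs). dim_le q e x k" using R_D(2)[OF gR] unfolding b_def by auto
  have "ext_op C k (\<lambda>xs. f (map (\<lambda>g. g xs) gs)) = ext_op C k (\<lambda>xs. q k (q n a (map b gs)) xs)"
  proof (rule ext_op_cong)
    fix xs assume xs: "xs \<in> tuples C k"
    have gx: "map (\<lambda>g. g xs) gs \<in> tuples C n" using R_D(5)[OF gR xs] comp(2) by (auto intro!: tuplesI)
    have mm: "map (\<lambda>g. g xs) gs = map (\<lambda>x. q k x xs) (map b gs)"
      unfolding map_map by (rule map_cong[OF refl]) (use R_D(4)[OF gR xs] in \<open>simp add: b_def\<close>)
    have "f (map (\<lambda>g. g xs) gs) = q n a (map (\<lambda>g. g xs) gs)" using R_D(4)[OF fR gx] a_def by simp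
    also have "\<dots> = q n a (map (\<lambda>x. q k x xs) (map b gs))" by (simp only: mm)
    also have "\<dots> = q k (q n a (map b gs)) xs" using K[OF a bs db xs] by simp
    finally show "f (map (\<lambda>g. g xs) gs) = q k (q n a (map b gs)) xs" .
  qed
  moreover have "(k, ext_op C k (\<lambda>xs. q k (q n a (map b gs)) xs)) \<in> R_C C q e"
    by (rule R_mem[OF q_in[OF a(1) bs] K2[OF a bs db]])
  ultimately show ?case by simp
next
  case (restr k f c)
  have fR: "(Suc k, f) \<in> R_C C q e" using restr by simp
  define a where "a = f (es e (Suc k))"
  have a: "a \<in> C" "dim_le q e a (Suc k)" using R_D[OF fR] unfolding a_def by auto
  have fe: "\<And>xs. xs \<in> tuples C (Suc k) \<Longrightarrow> f xs = q (Suc k) a xs" using R_D(4)[OF fR] a_def by simp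
  have ind: "indep q e a (Suc k)"
  proof -
    have t1: "es e k @ [e (Suc (Suc k))] \<in> tuples C (Suc k)" by (rule tuples_snoc[OF es_tuples e_in]) simp
    have "q (Suc k) a (map e [1..<Suc k] @ [e (Suc (Suc k))]) = f (es e k @ [e (Suc (Suc k))])"
      using fe[OF t1] by (simp add: es_def)
    also have "\<dots> = f (es e k @ [e (Suc k)])"
      by (rule restr(2)[rule_format, OF es_tuples e_in e_in]) simp_all
    also have "\<dots> = a" unfolding a_def es_Suc ..
    finally show ?thesis unfolding indep_def by simp
  qed
  have dk: "dim_le q e a k"
    using a(2) ind unfolding dim_le_def depends_on_def by (metis le_Suc_eq)
  have "ext_op C k (\<lambda>xs. f (xs @ [c])) = ext_op C k (\<lambda>xs. q k a xs)"
  proof (rule ext_op_cong)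
    fix xs assume xs: "xs \<in> tuples C k"
    show "f (xs @ [c]) = q k a xs" using fe[OF tuples_snoc[OF xs restr(3)]] step[OF a(1) ind xs restr(3)] by simp
  qed
  thus ?case using R_mem[OF a(1) dk] by simp
qed


lemma list_bound: "(\<forall>x\<in>set xs. \<exists>N0::nat. \<forall>N\<ge>N0. P x N) \<Longrightarrow> \<exists>N0. \<forall>x\<in>set xs. \<forall>N\<ge>N0. P x N"
proof (induction xs)
  case Nil
  then show ?case by simp
next
  case (Cons y ys)
  then obtain N1 where N1: "\<forall>x\<in>set ys. \<forall>N\<ge>N1. P x N" by auto
  obtain N2 where N2: "\<forall>N\<ge>N2. P y N" using Cons.prems by auto
  have "\<forall>x\<in>set (y#ys). \<forall>N\<ge>max N1 N2. P x N"
  proof (intro ballI allI impI)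
    fix x N assume x: "x \<in> set (y#ys)" and N: "max N1 N2 \<le> N"
    have "N1 \<le> N" using max.cobounded1[of N1 N2] N by linarith
    have "N2 \<le> N" using max.cobounded2[of N1 N2] N by linarith
    thus "P x N" using N1 N2 x \<open>N1 \<le> N\<close> by auto
  qed
  thus ?case by blast
qed

lemma descent:
  assumes a: "a \<in> C" and d: "dim_le q e a k"
  shows "k \<le> N \<Longrightarrow> (N, ext_op C N (\<lambda>xs. q N a xs)) \<in> Clo C T ar sig \<Longrightarrow>
    (k, ext_op C k (\<lambda>xs. q k a xs)) \<in> Clo C T ar sig"
proof (induction N)
  case 0
  then show ?case by simp
next
  case (Suc N)
  show ?case
  proof (cases "k = Suc N")
    case True
    then show ?thesis using Suc.prems by simp
  next
    case False
    hence kN: "k \<le> N" using Suc.prems by simp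
    have ind: "indep q e a (Suc N)" using indep_of_dim[OF d] kN by simp
    let ?F = "ext_op C (Suc N) (\<lambda>xs. q (Suc N) a xs)"
    have F: "\<And>xs c. xs \<in> tuples C N \<Longrightarrow> c \<in> C \<Longrightarrow> ?F (xs @ [c]) = q N a xs"
      using step[OF a ind] tuples_snoc unfolding ext_op_def by simp
    have "(N, ext_op C N (\<lambda>xs. ?F (xs @ [e 1]))) \<in> Clo C T ar sig"
      by (rule Clo.restr[OF Suc.prems(2)]) (auto simp: F e_in)
    moreover have "ext_op C N (\<lambda>xs. ?F (xs @ [e 1])) = ext_op C N (\<lambda>xs. q N a xs)"
      by (rule ext_op_cong) (simp add: F e_in)
    ultimately show ?thesis using Suc.IH kN by simp
  qed
qed

lemma R_Clo:
  assumes mn: "minimal C e (sig_ops T ar sig)" and fR: "(k, f) \<in> R_C C q e"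
  shows "(k, f) \<in> Clo C T ar sig"
proof -
  define P where "P = (\<lambda>a N. (N, ext_op C N (\<lambda>xs. q N a xs)) \<in> Clo C T ar sig)"
  define S where "S = {a \<in> C. \<exists>N0. \<forall>N\<ge>N0. P a N}"
  have S1: "S \<subseteq> C" unfolding S_def by auto
  have S2: "\<forall>i\<ge>1. e i \<in> S"
    proof (intro allI impI)
      fix i :: nat assume i: "1 \<le> i"
      have "\<forall>N\<ge>i. P (e i) N"
      proof (intro allI impI)
        fix N assume N: "i \<le> N"
        have "(N, ext_op C N (\<lambda>xs. xs ! (i - 1))) \<in> Clo C T ar sig" by (rule Clo.proj) (use i N in simp)
        moreover have "ext_op C N (\<lambda>xs. xs ! (i - 1)) = ext_op C N (\<lambda>xs. q N (e i) xs)"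
          by (rule ext_op_cong) (use i N in \<open>simp add: C1\<close>)
        ultimately show "P (e i) N" unfolding P_def by simp
      qed
      thus "e i \<in> S" unfolding S_def using e_in[OF i] by blast
    qed
  have S3: "\<forall>(k, f)\<in>sig_ops T ar sig. \<forall>xs\<in>tuples S k. f xs \<in> S"
    proof (clarsimp simp: sig_ops_def)
      fix s xs assume s: "s \<in> T" and xs: "xs \<in> tuples S (ar s)"
      have SC: "S \<subseteq> C" unfolding S_def by auto
      have xsC: "xs \<in> tuples C (ar s)" using tuples_mono[OF SC xs] .
      have "\<forall>x\<in>set xs. \<exists>N0. \<forall>N\<ge>N0. P x N" using xs unfolding S_def tuples_def by auto
      then obtain N0 where N0: "\<forall>x\<in>set xs. \<forall>N\<ge>N0. P x N" using list_bound by blast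
      have "\<forall>N\<ge>N0. P (sig s xs) N"
      proof (intro allI impI)
        fix N assume N: "N0 \<le> N"
        let ?gs = "map (\<lambda>x. ext_op C N (\<lambda>ys. q N x ys)) xs"
        have "(N, ext_op C N (\<lambda>ys. ext_op C (ar s) (sig s) (map (\<lambda>g. g ys) ?gs))) \<in> Clo C T ar sig"
          by (rule Clo.comp[OF Clo.basic[OF s]]) (use xsC N0 N in \<open>auto simp: P_def tuplesD\<close>)
        moreover have "ext_op C N (\<lambda>ys. ext_op C (ar s) (sig s) (map (\<lambda>g. g ys) ?gs)) = ext_op C N (\<lambda>ys. q N (sig s xs) ys)"
        proof (rule ext_op_cong)
          fix ys assume ys: "ys \<in> tuples C N"
          have m: "map (\<lambda>g. g ys) ?gs = map (\<lambda>x. q N x ys) xs" using ys by (simp add: ext_op_def)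
          have mt: "map (\<lambda>x. q N x ys) xs \<in> tuples C (ar s)"
          proof (rule tuplesI)
            show "length (map (\<lambda>x. q N x ys) xs) = ar s" using tuplesD[OF xsC] by simp
            show "set (map (\<lambda>x. q N x ys) xs) \<subseteq> C" using tuplesD[OF xsC] q_in[OF _ ys] by auto
          qed
          show "ext_op C (ar s) (sig s) (map (\<lambda>g. g ys) ?gs) = q N (sig s xs) ys"
            unfolding m using mt C6[OF s xsC ys] by (simp add: ext_op_def)
        qed
        ultimately show "P (sig s xs) N" unfolding P_def by simp
      qed
      thus "sig s xs \<in> S" unfolding S_def using sig_in[OF s xsC] by blast
    qed
  have "S = C" using mn S1 S2 S3 unfolding minimal_def by blast
  define a where "a = f (es e k)"
  have a: "a \<in> C" "dim_le q e a k" and fa: "f = ext_op C k (\<lambda>xs. q k a xs)"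
    using R_D[OF fR] unfolding a_def by auto
  then obtain N0 where N0: "\<forall>N\<ge>N0. P a N" using \<open>S = C\<close> unfolding S_def by blast
  have "P a (max N0 k)" using N0 by simp
  thus ?thesis unfolding fa P_def by (intro descent[OF a, of "max N0 k"]) auto
qed

lemma Clo_pres:
  assumes SC: "S \<subseteq> C" and eS: "\<forall>i\<ge>1. e i \<in> S"
    and cl: "\<forall>(k, f)\<in>sig_ops T ar sig. \<forall>xs\<in>tuples S k. f xs \<in> S"
  shows "(k, f) \<in> Clo C T ar sig \<Longrightarrow> \<forall>xs\<in>tuples S k. f xs \<in> S"
proof (induction rule: Clo.induct)
  case (proj i k)
  show ?case
  proof
    fix xs assume xs: "xs \<in> tuples S k"
    have xC: "xs \<in> tuples C k" using tuples_mono[OF SC xs] .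
    have "xs ! i \<in> set xs" using xs proj by (simp add: tuples_def)
    hence "xs ! i \<in> S" using xs by (auto simp: tuples_def)
    thus "ext_op C k (\<lambda>xs. xs ! i) xs \<in> S" using xC by (simp add: ext_op_def)
  qed
next
  case (basic s)
  show ?case
  proof
    fix xs assume xs: "xs \<in> tuples S (ar s)"
    have xC: "xs \<in> tuples C (ar s)" using tuples_mono[OF SC xs] .
    have "(ar s, sig s) \<in> sig_ops T ar sig" using basic by (simp add: sig_ops_def)
    hence "sig s xs \<in> S" using cl xs by fast
    thus "ext_op C (ar s) (sig s) xs \<in> S" using xC by (simp add: ext_op_def)
  qed
next
  case (comp n f gs k)
  show ?case
  proof
    fix xs assume xs: "xs \<in> tuples S k"
    have "\<forall>g\<in>set gs. g xs \<in> S" using comp.IH xs by blast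
    hence "map (\<lambda>g. g xs) gs \<in> tuples S n" using comp.hyps(2) by (auto simp: tuples_def)
    hence "f (map (\<lambda>g. g xs) gs) \<in> S" using comp.IH(1) by blast
    thus "ext_op C k (\<lambda>xs. f (map (\<lambda>g. g xs) gs)) xs \<in> S"
      using tuples_mono[OF SC xs] by (simp add: ext_op_def)
  qed
next
  case (restr k f c)
  show ?case
  proof
    fix xs assume xs: "xs \<in> tuples S k"
    have xC: "xs \<in> tuples C k" using tuples_mono[OF SC xs] .
    have "f (xs @ [c]) = f (xs @ [e 1])"
      by (rule restr(2)[rule_format, OF xC restr(3) e_in]) simp
    moreover have "xs @ [e 1] \<in> tuples S (Suc k)" using xs eS by (auto simp: tuples_def)
    ultimately show "ext_op C k (\<lambda>xs. f (xs @ [c])) xs \<in> S" using restr(4) xC by (simp add: ext_op_def)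
  qed
qed

end

theorem proposition11p12:
  fixes C :: "'a set" and T :: "'s set" and ar :: "'s \<Rightarrow> nat"
    and sig :: "'s \<Rightarrow> 'a list \<Rightarrow> 'a"
    and q :: "nat \<Rightarrow> 'a \<Rightarrow> 'a list \<Rightarrow> 'a" and e :: "nat \<Rightarrow> 'a"
  assumes "clone_alg C T ar sig q e"
    and "finite_dimensional C q e"
  shows "minimal C e (R_C C q e) \<and>
         (minimal C e (sig_ops T ar sig) \<longleftrightarrow> R_C C q e = Clo C T ar sig)"
proof -
  interpret ca C T ar sig q e by unfold_locales (rule assms(1))
  have mR: "minimal C e (R_C C q e)" by (rule minimal_R[OF assms(2)])
  have "minimal C e (sig_ops T ar sig) \<longleftrightarrow> R_C C q e = Clo C T ar sig"
  proof
    assume m: "minimal C e (sig_ops T ar sig)"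
    show "R_C C q e = Clo C T ar sig"
      using R_Clo[OF m] Clo_R by auto
  next
    assume eq: "R_C C q e = Clo C T ar sig"
    show "minimal C e (sig_ops T ar sig)"
      unfolding minimal_def
    proof (intro allI impI)
      fix S assume H: "S \<subseteq> C \<and> (\<forall>i\<ge>1. e i \<in> S) \<and> (\<forall>(k, f)\<in>sig_ops T ar sig. \<forall>xs\<in>tuples S k. f xs \<in> S)"
      have "\<forall>(k, f)\<in>R_C C q e. \<forall>xs\<in>tuples S k. f xs \<in> S"
        using Clo_pres[of S] H unfolding eq by blast
      thus "S = C" using mR H unfolding minimal_def by blast
    qed
  qed
  with mR show ?thesis by simp
qed

end
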